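(* For every integer $k\ge0$ and every real $x\in[0,1]$, $$\log_2(1+kx)\ge\log_2(1+k)\cdot\log_2(1+x).$$ *)

theory Defs
  imports Complex_Main
begin

end

theory Submission
  imports Defs "HOL-Analysis.Analysis"
begin

theorem mainTheorem11:
  fixes k :: nat and x :: real
  assumes "0 \<le> x" and "x \<le> 1"
  shows "log 2 (1 + real k * x) \<ge> log 2 (1 + real k) * log 2 (1 + x)"
proof (cases "k = 0")
  case True
  then show ?thesis by simp
next
  case False
  define a where "a = log 2 (1 + real k)"
  have a1: "a \<ge> 1" using False unfolding a_def by simp
  have 2: "2 powr a = 1 + real k" unfolding a_def by simp
  have "(\<lambda>y. y powr a) ((1 - x) *\<^sub>R 1 + x *\<^sub>R 2) \<le> (1 - x) * 1 powr a + x * 2 powr a"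
    by (rule convex_onD[OF powr_convex[OF a1]]) (use assms in auto)
  hence le: "(1 + x) powr a \<le> 1 + real k * x" using 2 by (simp add: algebra_simps)
  have "log 2 ((1 + x) powr a) \<le> log 2 (1 + real k * x)"
    using le assms by (subst log_le_cancel_iff) (auto intro: add_pos_nonneg)
  moreover have "log 2 ((1 + x) powr a) = a * log 2 (1 + x)"
    using assms by (simp add: log_powr)
  ultimately show ?thesis unfolding a_def by (simp add: mult.commute)
qed

end
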